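(* Let $m$ be a non-negative integer and let $S=(u_0,\dots,u_{n-1})$ be a finite sequence of elements of $\mathbb{Z}/m\mathbb{Z}$. Then $S$ is antisymmetric if and only if its derived sequence $\partial S$ is antisymmetric and $2\sigma(S)=\sigma(\partial S)=0$.
   Context: $\mathbb{Z}/0\mathbb{Z}=\mathbb{Z}$. A finite sequence $(v_0,\dots,v_{\ell-1})$ is antisymmetric if $v_{\ell-1-j}=-v_j$ for all $j$ (the empty sequence is antisymmetric). For $n\ge2$, $\partial S=(-u_j-u_{j+1})_{j=0}^{n-2}$; for $n\le1$, $\partial S$ is the empty sequence. $\sigma(v_0,\dots,v_{\ell-1})=\sum_{j=0}^{\ell-1}v_j$ (zero for the empty sequence). *)

theory Defs
  imports "HOL-Number_Theory.Cong"
begin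

text \<open>Elements of Z/mZ are represented by integers; equality in Z/mZ is
  congruence modulo m (for m = 0 this is equality in Z).\<close>

definition antisymmetric_mod :: "nat \<Rightarrow> int list \<Rightarrow> bool" where
  "antisymmetric_mod m v \<longleftrightarrow>
     (\<forall>j < length v. [v ! (length v - 1 - j) = - (v ! j)] (mod int m))"

definition derived :: "int list \<Rightarrow> int list" where
  "derived u = (if length u \<ge> 2
                 then map (\<lambda>j. - (u ! j) - u ! (j + 1)) [0..<length u - 1]
                 else [])"

definition sigma :: "int list \<Rightarrow> int" where
  "sigma v = sum_list v"

end

theory Submission
  imports Defs
begin

lemma anti_dvd:
  "antisymmetric_mod m v \<longleftrightarrow>
     (\<forall>j < length v. int m dvd (v ! (length v - 1 - j) + v ! j))"
  unfolding antisymmetric_mod_def cong_iff_dvd_diff by simp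

lemma derived_len: "length (derived u) = length u - 1"
  unfolding derived_def by auto

lemma derived_nth: "j < length u - 1 \<Longrightarrow> derived u ! j = - (u ! j) - u ! (j + 1)"
  unfolding derived_def by auto

lemma sum_rev: "(\<Sum>j<length S. S ! (length S - 1 - j)) = sum_list S"
proof -
  have "sum_list (rev S) = (\<Sum>j<length S. rev S ! j)"
    by (simp add: sum_list_sum_nth atLeast0LessThan)
  also have "\<dots> = (\<Sum>j<length S. S ! (length S - 1 - j))"
    by (rule sum.cong) (auto simp: rev_nth)
  finally show ?thesis by simp
qed

lemma two_sigma: "2 * sigma S = (\<Sum>j<length S. S ! j + S ! (length S - 1 - j))"
  using sum_rev[of S] by (simp only: sum.distrib sigma_def sum_list_sum_nth atLeast0LessThan mult_2)

lemma sigma_derived: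
  assumes "length S \<ge> 2"
  shows "sigma (derived S) = - 2 * sigma S + S ! 0 + S ! (length S - 1)"
proof -
  let ?n = "length S"
  have "sigma (derived S) = (\<Sum>j<?n - 1. - (S ! j) - S ! (j + 1))"
    using assms by (simp add: sigma_def derived_def sum_list_sum_nth atLeast0LessThan)
  also have "\<dots> = - (\<Sum>j<?n - 1. S ! j) - (\<Sum>j<?n - 1. S ! (j + 1))"
    by (simp add: sum_subtractf sum_negf)
  also have "(\<Sum>j<?n - 1. S ! j) = sigma S - S ! (?n - 1)"
  proof -
    have e: "Suc (?n - 1) = ?n" using assms by simp
    have "sigma S = (\<Sum>j<Suc (?n - 1). S ! j)"
      by (simp only: e sigma_def sum_list_sum_nth atLeast0LessThan)
    also have "\<dots> = (\<Sum>j<?n - 1. S ! j) + S ! (?n - 1)"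
      by (rule sum.lessThan_Suc)
    finally show ?thesis by simp
  qed
  also have "(\<Sum>j<?n - 1. S ! (j + 1)) = sigma S - S ! 0"
  proof -
    have e: "Suc (?n - 1) = ?n" using assms by simp
    have "sigma S = (\<Sum>j<Suc (?n - 1). S ! j)"
      by (simp only: e sigma_def sum_list_sum_nth atLeast0LessThan)
    also have "\<dots> = S ! 0 + (\<Sum>j<?n - 1. S ! (Suc j))"
      by (rule sum.lessThan_Suc_shift)
    finally show ?thesis by simp
  qed
  finally show ?thesis by simp
qed

theorem proposition11:
  fixes m :: nat and S :: "int list"
  shows "antisymmetric_mod m S \<longleftrightarrow>
           (antisymmetric_mod m (derived S)
            \<and> [2 * sigma S = 0] (mod int m)
            \<and> [sigma (derived S) = 0] (mod int m))"
proof -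
  define n where "n = length S"
  define w where "w j = S ! j + S ! (n - 1 - j)" for j
  define M where "M = int m"
  have A: "antisymmetric_mod m S \<longleftrightarrow> (\<forall>j<n. M dvd w j)"
    unfolding anti_dvd w_def n_def M_def by (auto simp: add.commute)
  have D: "antisymmetric_mod m (derived S) \<longleftrightarrow> (\<forall>j<n-1. M dvd (w j + w (j+1)))"
  proof -
    have "derived S ! (n - 1 - 1 - j) + derived S ! j = - (w j + w (j+1))" if "j < n - 1" for j
      using that unfolding w_def
      by (simp add: derived_nth n_def Suc_diff_Suc numeral_2_eq_2)
    then have "\<And>j. j < n - 1 \<Longrightarrow> (M dvd (derived S ! (n - 1 - 1 - j) + derived S ! j)
       \<longleftrightarrow> M dvd (w j + w (j+1)))"
      by (metis dvd_minus_iff)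
    then show ?thesis unfolding anti_dvd M_def[symmetric] derived_len n_def[symmetric]
      by auto
  qed
  have T: "2 * sigma S = (\<Sum>j<n. w j)" unfolding w_def n_def by (rule two_sigma)
  show ?thesis
  proof
    assume a: "antisymmetric_mod m S"
    then have W: "\<And>j. j < n \<Longrightarrow> M dvd w j" using A by auto
    have 1: "antisymmetric_mod m (derived S)"
      unfolding D using W by (simp add: dvd_add)
    have 2: "M dvd 2 * sigma S" unfolding T using W by (intro dvd_sum) auto
    have 3: "M dvd sigma (derived S)"
    proof (cases "n \<ge> 2")
      case True
      then have "sigma (derived S) = - (2 * sigma S) + w 0"
        using sigma_derived[of S] by (simp add: n_def w_def)
      then show ?thesis using 2 W[of 0] True by simp
    next
      case False
      then have "derived S = []" by (simp add: derived_def n_def)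
      then show ?thesis by (simp add: sigma_def)
    qed
    show "antisymmetric_mod m (derived S) \<and> [2 * sigma S = 0] (mod int m)
            \<and> [sigma (derived S) = 0] (mod int m)"
      using 1 2 3 by (simp add: cong_0_iff M_def)
  next
    assume "antisymmetric_mod m (derived S) \<and> [2 * sigma S = 0] (mod int m)
            \<and> [sigma (derived S) = 0] (mod int m)"
    then have d: "\<And>j. j < n - 1 \<Longrightarrow> M dvd (w j + w (j+1))" and
      s2: "M dvd 2 * sigma S" and sd: "M dvd sigma (derived S)"
      using D by (auto simp: cong_0_iff M_def)
    show "antisymmetric_mod m S"
    proof (cases "n \<ge> 2")
      case False
      then have "n = 0 \<or> n = 1" by auto
      then show ?thesis
      proof
        assume "n = 0" then show ?thesis using A by simp
      next
        assume n1: "n = 1"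
        have "2 * sigma S = w 0" using T n1 by simp
        then show ?thesis using A n1 s2 by simp
      qed
    next
      case True
      have "sigma (derived S) = - (2 * sigma S) + w 0"
        using sigma_derived[of S] True by (simp add: n_def w_def)
      then have w0: "M dvd w 0" using s2 sd
        by (metis add_diff_cancel_left' dvd_diff dvd_minus_iff)
      have "j < n \<longrightarrow> M dvd w j" for j
      proof (induction j)
        case 0 then show ?case using w0 by simp
      next
        case (Suc j)
        show ?case
        proof
          assume "Suc j < n"
          then have "M dvd w j" "M dvd (w j + w (j+1))" using Suc d by auto
          then show "M dvd w (Suc j)"
            by (metis add_diff_cancel_left' dvd_diff Suc_eq_plus1)
        qed
      qed
      then show ?thesis using A by auto
    qed
  qed
qed

end
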